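(* Let $G$ be a finite simple graph with vertices $v_1,\dots,v_n$ ($n\ge 1$) in which no vertex is adjacent to all other vertices, let $d\ge 1$ be an integer, let $G'$ be the graph constructed from $(G,d)$ as described in the context, and let $h=n(n+1)+d$. Suppose $S_1,\dots,S_h$ are pairwise disjoint vertex sets of $G'$, each inducing a connected subgraph, such that for all $i\ne j$ some edge of $G'$ joins a vertex of $S_i$ to a vertex of $S_j$. Then for each $p\in\{1,\dots,n\}$ there exists $q\in\{1,\dots,n+1\}$ such that the single-vertex set $\{b_{p,q}\}$ is one of the sets $S_1,\dots,S_h$.
   Context: Construction of $G'$ from a graph $G$ with vertices $v_1,\dots,v_n$ and an integer $d$: say $v_i$ dominates $v_j$ if $v_i=v_j$ or $v_iv_j$ is an edge of $G$. The vertex set of $G'$ consists of top vertices $t_1,\dots,t_d$, middle vertices $m_1,\dots,m_n$, and bottom vertices $b_{j,k}$ for $1\le j\le n$, $1\le k\le n+1$. Edges: the top vertices form a clique; the middle vertices form an independent set; the bottom vertices form a clique (of size $n(n+1)$); every top vertex is adjacent to every middle vertex; there are no top–bottom edges; middle vertex $m_i$ is adjacent to bottom vertex $b_{j,k}$ if and only if $v_i$ dominates $v_j$ in $G$. *)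

theory Defs
  imports Main
begin

text \<open>The input graph G has vertex set {1..n}; its edges are given by a symmetric,
irreflexive relation E (only its values on {1..n} matter).\<close>

definition simple_graph_on :: "nat \<Rightarrow> (nat \<Rightarrow> nat \<Rightarrow> bool) \<Rightarrow> bool" where
  "simple_graph_on n E \<longleftrightarrow>
     (\<forall>i\<in>{1..n}. \<forall>j\<in>{1..n}. E i j \<longleftrightarrow> E j i) \<and> (\<forall>i\<in>{1..n}. \<not> E i i)"

definition dominates :: "(nat \<Rightarrow> nat \<Rightarrow> bool) \<Rightarrow> nat \<Rightarrow> nat \<Rightarrow> bool" where
  "dominates E i j \<longleftrightarrow> i = j \<or> E i j"

datatype gv = Top nat | Mid nat | Bot nat nat

definition verts' :: "nat \<Rightarrow> nat \<Rightarrow> gv set" where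
  "verts' n d = Top ` {1..d} \<union> Mid ` {1..n} \<union> {Bot j k | j k. j \<in> {1..n} \<and> k \<in> {1..n+1}}"

fun adj0 :: "(nat \<Rightarrow> nat \<Rightarrow> bool) \<Rightarrow> gv \<Rightarrow> gv \<Rightarrow> bool" where
  "adj0 E (Top a) (Top b) = (a \<noteq> b)"
| "adj0 E (Top a) (Mid i) = True"
| "adj0 E (Top a) (Bot j k) = False"
| "adj0 E (Mid i) (Top a) = True"
| "adj0 E (Mid i) (Mid i') = False"
| "adj0 E (Mid i) (Bot j k) = dominates E i j"
| "adj0 E (Bot j k) (Top a) = False"
| "adj0 E (Bot j k) (Mid i) = dominates E i j"
| "adj0 E (Bot j k) (Bot j' k') = ((j, k) \<noteq> (j', k'))"

definition adj' :: "nat \<Rightarrow> nat \<Rightarrow> (nat \<Rightarrow> nat \<Rightarrow> bool) \<Rightarrow> gv \<Rightarrow> gv \<Rightarrow> bool" where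
  "adj' n d E x y \<longleftrightarrow> x \<in> verts' n d \<and> y \<in> verts' n d \<and> adj0 E x y"

definition induces_connected :: "nat \<Rightarrow> nat \<Rightarrow> (nat \<Rightarrow> nat \<Rightarrow> bool) \<Rightarrow> gv set \<Rightarrow> bool" where
  "induces_connected n d E S \<longleftrightarrow> S \<noteq> {} \<and> S \<subseteq> verts' n d \<and>
     (\<forall>x\<in>S. \<forall>y\<in>S. (\<lambda>u v. u \<in> S \<and> v \<in> S \<and> adj' n d E u v)\<^sup>*\<^sup>* x y)"

end

theory Submission imports Defs begin

lemma card_le_by_reps:
  assumes "finite X" "\<forall>i\<in>A. S i \<inter> X \<noteq> {}" "\<forall>i\<in>A. \<forall>j\<in>A. i \<noteq> j \<longrightarrow> S i \<inter> S j = {}"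
  shows "card A \<le> card X"
proof -
  define f where "f i = (SOME y. y \<in> S i \<inter> X)" for i
  have f: "f i \<in> S i \<inter> X" if i: "i \<in> A" for i
  proof -
    from assms(2) i obtain y where "y \<in> S i \<inter> X" by blast
    then show ?thesis unfolding f_def by (rule someI)
  qed
  have "inj_on f A" unfolding inj_on_def
  proof (intro ballI impI)
    fix i j assume ij: "i \<in> A" "j \<in> A" "f i = f j"
    show "i = j"
    proof (rule ccontr)
      assume "i \<noteq> j"
      then have "S i \<inter> S j = {}" using assms(3) ij(1,2) by blast
      moreover have "f i \<in> S i" "f j \<in> S j" using f ij(1,2) by auto
      ultimately show False using ij(3) by auto
    qed
  qed
  moreover have "f ` A \<subseteq> X" using f by blast
  ultimately show ?thesis using card_inj_on_le assms(1) by blast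
qed

lemma top_path:
  assumes "(\<lambda>u v. u \<in> A \<and> v \<in> A \<and> adj' n d E u v)\<^sup>*\<^sup>* x y" "x \<in> range Top" "A \<inter> range Mid = {}"
  shows "y \<in> range Top"
  using assms
proof (induction rule: rtranclp_induct)
  case base then show ?case by simp
next
  case (step y z)
  then obtain a where "y = Top a" by auto
  then show ?case using step by (cases z) (auto simp: adj'_def)
qed

theorem lemma4:
  fixes n d :: nat and E :: "nat \<Rightarrow> nat \<Rightarrow> bool" and S :: "nat \<Rightarrow> gv set"
  assumes "n \<ge> 1" and "d \<ge> 1"
    and "simple_graph_on n E"
    and "\<forall>i\<in>{1..n}. \<exists>j\<in>{1..n}. j \<noteq> i \<and> \<not> E i j"
    and "\<forall>i\<in>{1..n*(n+1)+d}. S i \<subseteq> verts' n d"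
    and "\<forall>i\<in>{1..n*(n+1)+d}. \<forall>j\<in>{1..n*(n+1)+d}. i \<noteq> j \<longrightarrow> S i \<inter> S j = {}"
    and "\<forall>i\<in>{1..n*(n+1)+d}. induces_connected n d E (S i)"
    and "\<forall>i\<in>{1..n*(n+1)+d}. \<forall>j\<in>{1..n*(n+1)+d}. i \<noteq> j \<longrightarrow>
           (\<exists>x\<in>S i. \<exists>y\<in>S j. adj' n d E x y)"
  shows "\<forall>p\<in>{1..n}. \<exists>q\<in>{1..n+1}. \<exists>i\<in>{1..n*(n+1)+d}. S i = {Bot p q}"
proof (intro ballI)
  fix p assume p: "p \<in> {1..n}"
  show "\<exists>q\<in>{1..n+1}. \<exists>i\<in>{1..n*(n+1)+d}. S i = {Bot p q}"
  proof (rule ccontr)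
    assume nop: "\<not> (\<exists>q\<in>{1..n+1}. \<exists>i\<in>{1..n*(n+1)+d}. S i = {Bot p q})"
    define h where "h = n*(n+1)+d"
    define J where "J = {1..h}"
    define Tops where "Tops = Top ` {1..d}"
    define Mids where "Mids = Mid ` {1..n}"
    define Bots where "Bots = {Bot j k | j k. j\<in>{1..n} \<and> k\<in>{1..n+1}}"
    have V: "verts' n d = Tops \<union> Mids \<union> Bots" unfolding verts'_def Tops_def Mids_def Bots_def by (rule refl)
    have BotsI: "Bots = (\<lambda>(j,k). Bot j k) ` ({1..n} \<times> {1..n+1})" by (auto simp: Bots_def)
    have cB: "card Bots = n*(n+1)" unfolding BotsI by (subst card_image) (auto simp: inj_on_def)
    have cT: "card Tops = d" unfolding Tops_def by (subst card_image) (auto simp: inj_on_def)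
    have cM: "card Mids = n" unfolding Mids_def by (subst card_image) (auto simp: inj_on_def)
    have finT: "finite Tops" and finM: "finite Mids" and finB: "finite Bots"
      unfolding Tops_def Mids_def BotsI by auto
    have TopsR: "Tops \<subseteq> range Top" and MidsR: "Mids \<subseteq> range Mid"
      unfolding Tops_def Mids_def by auto
    have BotsR: "Bots \<inter> range Top = {}" "Bots \<inter> range Mid = {}" unfolding Bots_def by auto
    have hJ: "J = {1..n*(n+1)+d}" unfolding J_def h_def ..
    have cJ: "card J = h" unfolding J_def by simp
    have finJ: "finite J" unfolding J_def by simp
    have SV: "\<forall>i\<in>J. S i \<subseteq> Tops \<union> Mids \<union> Bots" using assms(5) V hJ by auto
    have disj: "\<forall>i\<in>J. \<forall>j\<in>J. i\<noteq>j \<longrightarrow> S i \<inter> S j = {}" using assms(6) hJ by auto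
    have ne: "\<forall>i\<in>J. S i \<noteq> {}" using assms(7) hJ unfolding induces_connected_def by auto
    have conn: "\<forall>i\<in>J. \<forall>x\<in>S i. \<forall>y\<in>S i. (\<lambda>u v. u \<in> S i \<and> v \<in> S i \<and> adj' n d E u v)\<^sup>*\<^sup>* x y"
      using assms(7) hJ unfolding induces_connected_def by auto
    have adjS: "\<forall>i\<in>J. \<forall>j\<in>J. i\<noteq>j \<longrightarrow> (\<exists>x\<in>S i. \<exists>y\<in>S j. adj0 E x y)"
      using assms(8) hJ unfolding adj'_def by blast
    have VT: "x \<in> Tops \<union> Mids \<union> Bots \<Longrightarrow> x \<in> range Top \<Longrightarrow> x \<in> Tops" for x
      by (auto simp: Mids_def Bots_def)
    have VM: "x \<in> Tops \<union> Mids \<union> Bots \<Longrightarrow> x \<in> range Mid \<Longrightarrow> x \<in> Mids" for x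
      by (auto simp: Tops_def Bots_def)
    have VB: "x \<in> Tops \<union> Mids \<union> Bots \<Longrightarrow> x \<notin> range Top \<Longrightarrow> x \<notin> range Mid \<Longrightarrow> x \<in> Bots" for x
      by (auto simp: Tops_def Mids_def)
    have finS: "\<forall>i\<in>J. finite (S i)" using SV finT finM finB by (meson finite_UnI finite_subset)
    have cls: "\<forall>i\<in>J. S i \<inter> range Mid \<noteq> {} \<or> S i \<subseteq> Tops \<or> S i \<subseteq> Bots"
    proof
      fix i assume i: "i \<in> J"
      show "S i \<inter> range Mid \<noteq> {} \<or> S i \<subseteq> Tops \<or> S i \<subseteq> Bots"
      proof (cases "S i \<inter> range Mid = {}")
        case nm: True
        show ?thesis
        proof (cases "\<exists>x\<in>S i. x \<in> range Top")
          case True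
          then obtain x where x: "x \<in> S i" "x \<in> range Top" by blast
          have "y \<in> Tops" if y: "y \<in> S i" for y
          proof -
            have "y \<in> range Top" by (rule top_path[OF conn[rule_format, OF i x(1) y] x(2) nm])
            then show ?thesis using VT SV i y by blast
          qed
          then have "S i \<subseteq> Tops" by blast
          then show ?thesis by blast
        next
          case False
          have "y \<in> Bots" if y: "y \<in> S i" for y
          proof -
            have "y \<notin> range Top" using False y by blast
            moreover have "y \<notin> range Mid" using nm y by blast
            ultimately show ?thesis using VB SV i y by blast
          qed
          then have "S i \<subseteq> Bots" by blast
          then show ?thesis by blast
        qed
      qed simp
    qed
    have nn: "n + 1 \<le> n*(n+1)" using assms(1) by simp
    have noT: "\<forall>i\<in>J. \<not> S i \<subseteq> Tops"
    proof (rule ccontr)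
      assume "\<not> (\<forall>i\<in>J. \<not> S i \<subseteq> Tops)"
      then obtain i0 where i0: "i0 \<in> J" "S i0 \<subseteq> Tops" by blast
      have "\<forall>j\<in>J. S j \<inter> (Tops \<union> Mids) \<noteq> {}"
      proof
        fix j assume j: "j \<in> J"
        show "S j \<inter> (Tops \<union> Mids) \<noteq> {}"
        proof (cases "j = i0")
          case True then show ?thesis using i0 ne by blast
        next
          case False
          then have "i0 \<noteq> j" by simp
          then obtain x y where xy: "x \<in> S i0" "y \<in> S j" "adj0 E x y" using adjS i0(1) j by blast
          have "x \<in> range Top" using i0(2) xy(1) TopsR by blast
          then obtain a where "x = Top a" by blast
          then have "y \<notin> Bots" using xy(3) unfolding Bots_def by auto
          then show ?thesis using xy(2) SV j by blast
        qed
      qed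
      note allTM = this
      have "card J \<le> card (Tops \<union> Mids)"
        by (rule card_le_by_reps[OF _ allTM disj]) (simp add: finT finM)
      also have "\<dots> \<le> d + n" using card_Un_le[of Tops Mids] cT cM by simp
      finally show False using cJ h_def nn by simp
    qed
    define JM where "JM = {i\<in>J. S i \<inter> range Mid \<noteq> {}}"
    define JB where "JB = J - JM"
    have JMJ: "JM \<subseteq> J" unfolding JM_def by auto
    have finJM: "finite JM" "finite JB" using finJ JMJ unfolding JB_def by (auto intro: finite_subset)
    have JBsub: "\<forall>i\<in>JB. S i \<subseteq> Bots" using cls noT unfolding JB_def JM_def by auto
    have JMmid: "\<forall>i\<in>JM. S i \<inter> Mids \<noteq> {}"
    proof
      fix i assume i: "i \<in> JM"
      then obtain x where x: "x \<in> S i" "x \<in> range Mid" unfolding JM_def by blast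
      have "x \<in> Tops \<union> Mids \<union> Bots" using SV i x(1) unfolding JM_def by blast
      then have "x \<in> Mids" using VM x(2) by blast
      then show "S i \<inter> Mids \<noteq> {}" using x(1) by blast
    qed
    have disjM: "\<forall>i\<in>JM. \<forall>j\<in>JM. i\<noteq>j \<longrightarrow> S i \<inter> S j = {}" using disj JMJ by blast
    define k where "k = card JM"
    have "card JM \<le> card Mids" by (rule card_le_by_reps[OF finM JMmid disjM])
    then have kn: "k \<le> n" unfolding k_def using cM by simp
    have cJB: "card JB + k = h" unfolding JB_def k_def using card_Diff_subset[OF finJM(1) JMJ] card_mono[OF finJ JMJ] cJ
      by simp
    define R where "R = Bots - (\<Union>l\<in>JB. S l)"
    define e where "e = (\<Sum>l\<in>JB. card (S l) - 1)"
    have finR: "finite R" unfolding R_def using finB by simp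
    have BotsU: "Bots = R \<union> (\<Union>l\<in>JB. S l)" unfolding R_def using JBsub by blast
    have keq: "k = d + e + card R"
    proof -
      have "card Bots = card R + card (\<Union>l\<in>JB. S l)"
        unfolding BotsU by (rule card_Un_disjoint) (use finB finJ finS in \<open>auto simp: R_def JB_def\<close>)
      also have "card (\<Union>l\<in>JB. S l) = (\<Sum>l\<in>JB. card (S l))"
        by (rule card_UN_disjoint) (use finJM finS disj in \<open>auto simp: JB_def\<close>)
      also have "(\<Sum>l\<in>JB. card (S l)) = (\<Sum>l\<in>JB. (card (S l) - 1) + 1)"
      proof (rule sum.cong)
        fix l assume "l \<in> JB"
        then have "card (S l) \<ge> 1" using ne finS unfolding JB_def by (simp add: Suc_leI card_gt_0_iff)
        then show "card (S l) = card (S l) - 1 + 1" by simp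
      qed simp
      also have "\<dots> = e + card JB" unfolding e_def sum.distrib by simp
      finally show ?thesis using cB cJB h_def by linarith
    qed
    define C where "C j = (\<lambda>q. Bot j q) ` {1..n+1}" for j
    have cC: "card (C j) = n + 1" for j unfolding C_def by (subst card_image) (auto simp: inj_on_def)
    have CB: "j \<in> {1..n} \<Longrightarrow> C j \<subseteq> Bots" for j unfolding C_def Bots_def by auto
    have colbound: "card (C j) \<le> card R + (\<Sum>l\<in>JB. card (S l \<inter> C j))" if j: "j \<in> {1..n}" for j
    proof -
      have "C j \<subseteq> R \<union> (\<Union>l\<in>JB. S l \<inter> C j)" using CB[OF j] BotsU by blast
      then have "card (C j) \<le> card (R \<union> (\<Union>l\<in>JB. S l \<inter> C j))"
        by (rule card_mono[rotated]) (use finR finJM finS in \<open>auto simp: JB_def\<close>)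
      also have "\<dots> \<le> card R + card (\<Union>l\<in>JB. S l \<inter> C j)" by (rule card_Un_le)
      also have "\<dots> \<le> card R + (\<Sum>l\<in>JB. card (S l \<inter> C j))" by (rule add_left_mono[OF card_UN_le[OF finJM(2)]])
      finally show ?thesis .
    qed
    define JM1 where "JM1 = {i\<in>JM. S i \<inter> Bots \<noteq> {}}"
    define JM2 where "JM2 = JM - JM1"
    have JM1R: "card JM1 \<le> card R"
    proof -
      have "\<forall>i\<in>JM1. S i \<inter> R \<noteq> {}"
      proof
        fix i assume i: "i \<in> JM1"
        then obtain x where x: "x \<in> S i" "x \<in> Bots" unfolding JM1_def by blast
        have "x \<notin> S l" if l: "l \<in> JB" for l
        proof
          assume xl: "x \<in> S l"
          have "i \<noteq> l" "i \<in> J" "l \<in> J" using i l JMJ unfolding JM1_def JB_def by auto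
          then show False using disj x(1) xl by blast
        qed
        then have "x \<notin> (\<Union>l\<in>JB. S l)" by blast
        then show "S i \<inter> R \<noteq> {}" using x unfolding R_def by blast
      qed
      moreover have "\<forall>i\<in>JM1. \<forall>j\<in>JM1. i\<noteq>j \<longrightarrow> S i \<inter> S j = {}" using disjM unfolding JM1_def by blast
      ultimately show ?thesis using card_le_by_reps[OF finR] by blast
    qed
    have two: "\<forall>i\<in>JM2. 2 \<le> card (S i \<inter> Mids)"
    proof
      fix i assume i: "i \<in> JM2"
      show "2 \<le> card (S i \<inter> Mids)"
      proof (rule ccontr)
        assume "\<not> 2 \<le> card (S i \<inter> Mids)"
        moreover have "card (S i \<inter> Mids) \<noteq> 0" using JMmid i finM unfolding JM2_def by auto
        ultimately have "card (S i \<inter> Mids) = 1" by simp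
        then obtain m where m: "S i \<inter> Mids = {m}" using card_1_singletonE by blast
        then obtain a where a: "m = Mid a" "a \<in> {1..n}" unfolding Mids_def by blast
        obtain j where j: "j \<in> {1..n}" "j \<noteq> a" "\<not> E a j" using assms(4) a(2) by blast
        have iJ: "i \<in> J" and iB: "S i \<inter> Bots = {}" using i JMJ unfolding JM2_def JM1_def by auto
        have lt: "card (S l \<inter> C j) \<le> card (S l) - 1" if l: "l \<in> JB" for l
        proof -
          have lJ: "l \<in> J" "l \<noteq> i" using l i unfolding JB_def JM2_def by auto
          then have "i \<noteq> l" by simp
          then obtain x y where xy: "x \<in> S i" "y \<in> S l" "adj0 E x y" using adjS iJ lJ(1) by blast
          have "x \<notin> Bots" using xy(1) iB by blast
          then have xTM: "x \<in> Tops \<or> x \<in> Mids" using SV iJ xy(1) by blast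
          have "y \<in> Bots" using JBsub l xy(2) by blast
          then obtain j' k' where yb: "y = Bot j' k'" unfolding Bots_def by blast
          have xM: "x = Mid a"
          proof (cases "x \<in> Mids")
            case True
            then have "x \<in> S i \<inter> Mids" using xy(1) by blast
            then show ?thesis using m a(1) by blast
          next
            case False
            then have "x \<in> Tops" using xTM by blast
            then obtain b where "x = Top b" unfolding Tops_def by blast
            then show ?thesis using xy(3) yb by simp
          qed
          have "dominates E a j'" using xy(3) xM yb by simp
          then have "x = Mid a \<and> (\<exists>j' k'. y = Bot j' k' \<and> dominates E a j')" using xM yb by blast
          then have "y \<notin> C j" using j unfolding C_def dominates_def by auto
          then have "S l \<inter> C j \<subset> S l" using xy(2) by blast
          then have "card (S l \<inter> C j) < card (S l)" using finS lJ(1) by (meson psubset_card_mono)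
          then show ?thesis by simp
        qed
        have "n + 1 \<le> card R + (\<Sum>l\<in>JB. card (S l \<inter> C j))" using colbound[OF j(1)] cC by simp
        also have "\<dots> \<le> card R + e" unfolding e_def using lt by (simp add: sum_mono)
        finally show False using keq kn assms(2) by linarith
      qed
    qed
    have mid_sum: "(\<Sum>i\<in>JM. card (S i \<inter> Mids)) \<le> n"
    proof -
      have "(\<Sum>i\<in>JM. card (S i \<inter> Mids)) = card (\<Union>i\<in>JM. S i \<inter> Mids)"
        by (rule card_UN_disjoint[symmetric]) (use finJM finM disj JMJ in auto)
      also have "\<dots> \<le> card Mids" by (rule card_mono[OF finM]) auto
      finally show ?thesis using cM by simp
    qed
    have "2 * k \<le> n + card JM1"
    proof -
      have JMu: "JM = JM1 \<union> JM2" "JM1 \<inter> JM2 = {}" unfolding JM2_def JM1_def by auto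
      have f12: "finite JM1" "finite JM2" using finJM(1) JMu by auto
      have "(\<Sum>i\<in>JM. card (S i \<inter> Mids)) = (\<Sum>i\<in>JM1. card (S i \<inter> Mids)) + (\<Sum>i\<in>JM2. card (S i \<inter> Mids))"
        unfolding JMu(1) by (rule sum.union_disjoint) (use f12 JMu in auto)
      moreover have "(\<Sum>i\<in>JM1. card (S i \<inter> Mids)) \<ge> card JM1"
      proof -
        have "(\<Sum>i\<in>JM1. (1::nat)) \<le> (\<Sum>i\<in>JM1. card (S i \<inter> Mids))"
          by (rule sum_mono) (use JMmid finM JMu in \<open>auto simp: Suc_leI card_gt_0_iff\<close>)
        then show ?thesis by simp
      qed
      moreover have "(\<Sum>i\<in>JM2. card (S i \<inter> Mids)) \<ge> 2 * card JM2"
      proof -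
        have "(\<Sum>i\<in>JM2. (2::nat)) \<le> (\<Sum>i\<in>JM2. card (S i \<inter> Mids))"
          by (rule sum_mono) (use two in auto)
        then show ?thesis by simp
      qed
      moreover have "k = card JM1 + card JM2" unfolding k_def JMu(1) by (rule card_Un_disjoint[OF f12 JMu(2)])
      ultimately show ?thesis using mid_sum by linarith
    qed
    then have ineq: "2*d + 2*e + card R \<le> n" using keq JM1R by linarith
    have lt2: "card (S l \<inter> C p) \<le> 2 * (card (S l) - 1)" if l: "l \<in> JB" for l
    proof (cases "card (S l) \<ge> 2")
      case True
      have "card (S l \<inter> C p) \<le> card (S l)" using finS l unfolding JB_def by (simp add: card_mono)
      then show ?thesis using True by linarith
    next
      case False
      have "card (S l) \<noteq> 0" using ne finS l unfolding JB_def by auto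
      then have "card (S l) = 1" using False by linarith
      then obtain y where y: "S l = {y}" using card_1_singletonE by blast
      have "y \<notin> C p"
      proof
        assume "y \<in> C p"
        then obtain q where "q \<in> {1..n+1}" "y = Bot p q" unfolding C_def by blast
        moreover have "l \<in> {1..n*(n+1)+d}" using l hJ unfolding JB_def by blast
        ultimately show False using nop y by blast
      qed
      then show ?thesis using y by simp
    qed
    have "n + 1 \<le> card R + (\<Sum>l\<in>JB. card (S l \<inter> C p))" using colbound[OF p] cC by simp
    also have "\<dots> \<le> card R + (\<Sum>l\<in>JB. 2 * (card (S l) - 1))" using lt2 by (simp add: sum_mono)
    also have "\<dots> = card R + 2 * e" unfolding e_def by (simp add: sum_distrib_left)
    finally show False using ineq assms(2) by linarith
  qed
qed

end
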